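(* Let $v_1,\dots,v_m$ be nonzero vectors spanning $\mathbb{R}^n$ ($m\ge n$) such that $(\mathbb{R}^n,(v_i)_{i=1}^m)$ is irreducible, and let $c=(c_i)_{i=1}^m$ with $c_i>0$, $\sum_ic_i=n$. Let $D_c=\inf\{\det(\sum_i\lambda_iv_i\otimes v_i)/\prod_i\lambda_i^{c_i};\ \lambda_i>0\}$. If $(\lambda_i)_{i=1}^m$ and $(\mu_i)_{i=1}^m$ are $m$-tuples of positive numbers both attaining this infimum, then there exists $r\in\mathbb{R}$ such that $\lambda_i=r\mu_i$ for all $i$.
   Context: The relation $\bowtie$ on $\{1,\dots,m\}$: $i\bowtie j$ iff there is $K\subset\{1,\dots,m\}$ with $|K|=n-1$ such that both $(v_i,(v_k)_{k\in K})$ and $(v_j,(v_k)_{k\in K})$ are bases of $\mathbb{R}^n$. $(\mathbb{R}^n,(v_i)_{i=1}^m)$ is irreducible if any two indices are joined by a finite chain of $\bowtie$-related indices. $v\otimes v=vv^T$. *)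

theory Defs
  imports "HOL-Analysis.Analysis"
begin

definition outer :: "real^'n \<Rightarrow> real^'n^'n" where
  "outer v = (\<chi> i j. v $ i * v $ j)"

text \<open>The family (v_k) indexed by I is a basis of R^n (as a family: no repeated entries).\<close>
definition basis_family :: "(nat \<Rightarrow> real^'n) \<Rightarrow> nat set \<Rightarrow> bool" where
  "basis_family v I \<longleftrightarrow> inj_on v I \<and> independent (v ` I) \<and> span (v ` I) = UNIV"

text \<open>i bowtie j: some K of size n-1 such that (v_i,(v_k)_{k in K}) and (v_j,(v_k)_{k in K})
  are both bases.  A family with a repeated index is not a basis, hence i,j \<notin> K.\<close>
definition bowtie :: "(nat \<Rightarrow> real^'n) \<Rightarrow> nat \<Rightarrow> nat \<Rightarrow> nat \<Rightarrow> bool" where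
  "bowtie v m i j \<longleftrightarrow> (\<exists>K. K \<subseteq> {1..m} \<and> card K = CARD('n) - 1 \<and> i \<notin> K \<and> j \<notin> K \<and>
      basis_family v (insert i K) \<and> basis_family v (insert j K))"

definition irreducible_family :: "(nat \<Rightarrow> real^'n) \<Rightarrow> nat \<Rightarrow> bool" where
  "irreducible_family v m \<longleftrightarrow>
     (\<forall>i\<in>{1..m}. \<forall>j\<in>{1..m}.
        (\<lambda>a b. a \<in> {1..m} \<and> b \<in> {1..m} \<and> bowtie v m a b)\<^sup>*\<^sup>* i j)"

definition bl_ratio :: "(nat \<Rightarrow> real^'n) \<Rightarrow> nat \<Rightarrow> (nat \<Rightarrow> real) \<Rightarrow> (nat \<Rightarrow> real) \<Rightarrow> real" where
  "bl_ratio v m c lam = det (\<Sum>i\<in>{1..m}. lam i *\<^sub>R outer (v i)) / (\<Prod>i\<in>{1..m}. lam i powr c i)"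

definition D_const :: "(nat \<Rightarrow> real^'n) \<Rightarrow> nat \<Rightarrow> (nat \<Rightarrow> real) \<Rightarrow> real" where
  "D_const v m c = Inf {bl_ratio v m c lam | lam. \<forall>i\<in>{1..m}. lam i > 0}"

end

theory Submission imports Defs begin

definition pdm :: "real^'n^'n \<Rightarrow> bool" where
  "pdm H \<longleftrightarrow> (\<forall>x. x \<noteq> 0 \<longrightarrow> x \<bullet> (H *v x) > 0)"

lemma pdm_det_nz:
  fixes H :: "real^'n^'n"
  assumes "pdm H" shows "det H \<noteq> 0"
proof -
  have "inj ((*v) H)"
  proof (rule injI)
    fix x y assume "H *v x = H *v y"
    then have "H *v (x - y) = 0" by (simp add: matrix_vector_mult_diff_distrib)
    then have "(x - y) \<bullet> (H *v (x - y)) = 0" by simp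
    then show "x = y" using assms unfolding pdm_def by (metis less_irrefl eq_iff_diff_eq_0)
  qed
  then show ?thesis
    using det_nz_iff_inj[of "(*v) H"] by (simp add: matrix_of_matrix_vector_mul)
qed

lemma continuous_on_det:
  fixes F :: "real \<Rightarrow> real^'n^'n"
  assumes "\<And>i j. continuous_on S (\<lambda>t. F t $ i $ j)"
  shows "continuous_on S (\<lambda>t. det (F t))"
  unfolding det_def
  by (intro continuous_intros assms)

lemma pdm_det_pos:
  fixes H :: "real^'n^'n"
  assumes "pdm H" shows "det H > 0"
proof (rule ccontr)
  assume "\<not> det H > 0"
  then have neg: "det H \<le> 0" by simp
  define F where "F t = (1 - t) *\<^sub>R (mat 1 :: real^'n^'n) + t *\<^sub>R H" for t :: real
  have cont: "continuous_on {0..1} (\<lambda>t. det (F t))"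
    by (rule continuous_on_det) (simp add: F_def, intro continuous_intros)
  have "F 1 = H" "F 0 = mat 1" by (simp_all add: F_def)
  then obtain t where t: "0 \<le> t" "t \<le> 1" "det (F t) = 0"
    using IVT2'[of "\<lambda>t. det (F t)" 1 0 0] cont neg by auto
  have "pdm (F t)"
    unfolding pdm_def
  proof (intro allI impI)
    fix x :: "real^'n" assume "x \<noteq> 0"
    have "x \<bullet> (F t *v x) = (1 - t) * (x \<bullet> x) + t * (x \<bullet> (H *v x))"
      by (simp add: F_def matrix_vector_mult_add_rdistrib scaleR_matrix_vector_assoc[symmetric] inner_add_right)
    moreover have "x \<bullet> x > 0" "x \<bullet> (H *v x) > 0" using \<open>x \<noteq> 0\<close> assms pdm_def by auto
    ultimately show "x \<bullet> (F t *v x) > 0" using t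
    proof (cases "t = 0")
      case False
      then show ?thesis using t \<open>x \<bullet> x > 0\<close> \<open>x \<bullet> (H *v x) > 0\<close> \<open>x \<bullet> (F t *v x) = _\<close>
        by (simp add: add_nonneg_pos)
    qed simp
  qed
  then show False using pdm_det_nz t by blast
qed

lemma sum_matrix_vector: "(sum f S :: real^'n^'m) *v x = (\<Sum>i\<in>S. f i *v x)"
  by (induction S rule: infinite_finite_induct) (auto simp: matrix_vector_mult_add_rdistrib)

lemma matrix_add_rdistrib': "((A::real^'n^'m) + B) ** (C::real^'k^'n) = A ** C + B ** C"
  by (vector matrix_matrix_mult_def sum.distrib[symmetric] field_simps)

lemma sum_matrix_mult_left: "(sum f S :: real^'n^'m) ** (B::real^'k^'n) = (\<Sum>i\<in>S. f i ** B)"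
  by (induction S rule: infinite_finite_induct) (auto simp: matrix_add_rdistrib')

lemma sum_matrix_mult_right: "(B::real^'k^'n) ** (sum f S :: real^'m^'k) = (\<Sum>i\<in>S. B ** f i)"
  by (induction S rule: infinite_finite_induct) (auto simp: matrix_add_ldistrib)

lemma outer_mult: "outer v *v x = (v \<bullet> x) *\<^sub>R v"
  by (simp add: outer_def matrix_vector_mult_def vec_eq_iff inner_vec_def sum_distrib_left mult_ac)

lemma outer_quad: "x \<bullet> (outer v *v x) = (v \<bullet> x)^2"
  by (simp add: outer_mult power2_eq_square inner_commute)

lemma transpose_outer: "transpose (outer v) = outer v"
  by (simp add: outer_def transpose_def vec_eq_iff mult.commute)

lemma det_rank1_aux1:
  fixes u w :: "real^'n"
  assumes "finite T" "k \<notin> T"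
  shows "det (\<chi> i. if i = k then w else if i \<in> T then axis i 1 + u$i *s w else axis i 1) = w$k"
  using assms
proof (induction T rule: finite_induct)
  case empty
  define A0 where "A0 = (\<chi> i. if i = k then w$k *s axis k 1 else axis i (1::real))"
  define x where "x = (\<Sum>j\<in>UNIV - {k}. w$j *s axis j (1::real))"
  have rowA0: "row j A0 = (if j = k then w$k *s axis k 1 else axis j 1)" for j
    by (simp add: A0_def row_def vec_eq_iff)
  have ax: "axis j 1 \<in> {row j A0 |j. j \<noteq> k}" if "j \<noteq> k" for j
    by (rule CollectI, rule exI[of _ j]) (simp add: rowA0 that)
  have "x \<in> span {row j A0 |j. j \<noteq> k}"
    unfolding x_def
  proof (rule span_sum)
    fix j assume "j \<in> UNIV - {k}"
    then show "w$j *s axis j 1 \<in> span {row j A0 |j. j \<noteq> k}"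
      unfolding scalar_mult_eq_scaleR by (intro span_mul span_base ax) auto
  qed
  then have xs: "x \<in> vec.span {row j A0 |j. j \<noteq> k}"
    by (simp only: span_vec_eq)
  have d1: "det (\<chi> i. if i = k then row k A0 + x else row i A0) = det A0"
    by (rule det_row_span[OF xs])
  have d2: "det A0 = w$k"
  proof -
    have "det A0 = (\<Prod>i\<in>UNIV. A0$i$i)"
      by (rule det_diagonal) (auto simp: A0_def axis_def)
    also have "\<dots> = (\<Prod>i\<in>UNIV. if i = k then w$k else 1)"
      by (rule prod.cong) (auto simp: A0_def axis_def)
    also have "\<dots> = w$k" by (simp add: prod.delta)
    finally show ?thesis .
  qed
  have d3: "row k A0 + x = w"
  proof -
    have "w = (\<Sum>j\<in>UNIV. w$j *s axis j (1::real))"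
      by (simp add: vec_eq_iff sum_component axis_def if_distrib[of "\<lambda>x. _ * x"] cong: if_cong)
    also have "\<dots> = w$k *s axis k 1 + x" unfolding x_def
      by (subst sum.remove[of UNIV k]) auto
    finally show ?thesis by (simp add: rowA0)
  qed
  have "(\<chi> i. if i = k then row k A0 + x else row i A0) = (\<chi> i. if i = k then w else if i \<in> {} then axis i 1 + u$i *s w else axis i 1)"
    using d3 by (simp add: rowA0 vec_eq_iff)
  then show ?case using d1 d2 by simp
next
  case (insert j T)
  let ?A = "(\<chi> i. if i = k then w else if i \<in> insert j T then axis i 1 + u$i *s w else axis i (1::real))"
  have jk: "j \<noteq> k" using insert by auto
  have "det (\<chi> l. if l = j then row j ?A + (- u$j) *s row k ?A else row l ?A) = det ?A"
    by (rule det_row_operation[OF jk])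
  moreover have "(\<chi> l. if l = j then row j ?A + (- u$j) *s row k ?A else row l ?A) =
     (\<chi> i. if i = k then w else if i \<in> T then axis i 1 + u$i *s w else axis i 1)"
  proof (rule vec_eq_iff[THEN iffD2], intro allI)
    fix i
    have r: "row l ?A = ?A $ l" for l by (simp add: row_def vec_lambda_eta)
    show "(\<chi> l. if l = j then row j ?A + (- u$j) *s row k ?A else row l ?A) $ i =
     (\<chi> i. if i = k then w else if i \<in> T then axis i 1 + u$i *s w else axis i 1) $ i"
      unfolding r using jk insert(2)
      by (cases "i = j"; cases "i = k") (simp_all add: vector_smult_lneg)
  qed
  ultimately show ?case using insert by simp
qed

lemma det_rank1_aux2:
  fixes u w :: "real^'n"
  assumes "finite T"
  shows "det (\<chi> i. if i \<in> T then axis i 1 + u$i *s w else axis i 1) = 1 + (\<Sum>i\<in>T. u$i * w$i)"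
  using assms
proof (induction T rule: finite_induct)
  case empty
  have "(\<chi> i. axis i (1::real)) = (mat 1 :: real^'n^'n)" by (simp add: mat_def axis_def vec_eq_iff)
  then show ?case by simp
next
  case (insert k T)
  let ?c = "\<lambda>i. if i \<in> T then axis i 1 + u$i *s w else axis i (1::real)"
  have "(\<chi> i. if i \<in> insert k T then axis i 1 + u$i *s w else axis i 1) =
     (\<chi> i. if i = k then axis i 1 + u$i *s w else ?c i)" using insert by (auto simp: vec_eq_iff)
  also have "det \<dots> = det (\<chi> i. if i = k then axis i 1 else ?c i) + det (\<chi> i. if i = k then u$i *s w else ?c i)"
    by (rule det_row_add)
  also have "(\<chi> i. if i = k then axis i 1 else ?c i) = (\<chi> i. ?c i)" using insert by (auto simp: vec_eq_iff)
  also have "det (\<chi> i. if i = k then u$i *s w else ?c i) = det (\<chi> i. if i = k then u$k *s w else ?c i)"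
    by (rule arg_cong[where f=det]) (auto simp: vec_eq_iff)
  also have "\<dots> = u$k * det (\<chi> i. if i = k then w else ?c i)" by (rule det_row_mul)
  also have "det (\<chi> i. if i = k then w else ?c i) = w$k" using det_rank1_aux1[OF insert(1,2), where u=u and w=w] by simp
  finally show ?case using insert by simp
qed

lemma det_rank1_id:
  fixes u w :: "real^'n"
  shows "det (mat 1 + (\<chi> i j. u$i * w$j)) = 1 + u \<bullet> w"
proof -
  have "mat 1 + (\<chi> i j. u$i * w$j) = (\<chi> i. if i \<in> UNIV then axis i 1 + u$i *s w else axis i 1)"
    by (simp add: vec_eq_iff mat_def axis_def)
  then show ?thesis using det_rank1_aux2[of UNIV u w] by (simp add: inner_vec_def)
qed


lemma det_rank1:
  fixes H Hi :: "real^'n^'n"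
  assumes "H ** Hi = mat 1"
  shows "det (H + outer w) = det H * (1 + (Hi *v w) \<bullet> w)"
proof -
  let ?u = "Hi *v w"
  have Hu: "H *v ?u = w" using assms by (simp add: matrix_vector_mul_assoc)
  have "H ** (\<chi> i j. ?u$i * w$j) = outer w"
  proof -
    have "H ** (\<chi> i j. ?u$i * w$j) = (\<chi> i j. (H *v ?u)$i * w$j)"
      by (simp add: vec_eq_iff matrix_matrix_mult_def matrix_vector_mult_def sum_distrib_right mult.assoc)
    then show ?thesis by (simp add: Hu outer_def)
  qed
  then have "H + outer w = H ** (mat 1 + (\<chi> i j. ?u$i * w$j))"
    by (simp add: matrix_add_ldistrib)
  then show ?thesis by (simp add: det_mul det_rank1_id)
qed

lemma pdm_inv:
  fixes H Hi :: "real^'n^'n"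
  assumes "pdm H" "H ** Hi = mat 1"
  shows "pdm Hi"
  unfolding pdm_def
proof (intro allI impI)
  fix x :: "real^'n" assume "x \<noteq> 0"
  define z where "z = Hi *v x"
  have Hz: "H *v z = x" using assms by (simp add: z_def matrix_vector_mul_assoc)
  then have "z \<noteq> 0" using \<open>x \<noteq> 0\<close> by auto
  then have "z \<bullet> (H *v z) > 0" using assms(1) pdm_def by blast
  moreover have "x \<bullet> (Hi *v x) = z \<bullet> (H *v z)"
    by (simp add: z_def[symmetric] Hz inner_commute)
  ultimately show "x \<bullet> (Hi *v x) > 0" by simp
qed

lemma pdm_add_outer:
  fixes H :: "real^'n^'n"
  assumes "pdm H" shows "pdm (H + outer w)"
  unfolding pdm_def
proof (intro allI impI)
  fix x :: "real^'n" assume "x \<noteq> 0"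
  then have "x \<bullet> (H *v x) > 0" using assms pdm_def by blast
  then show "x \<bullet> ((H + outer w) *v x) > 0"
    by (simp add: matrix_vector_mult_add_rdistrib inner_add_right outer_quad add_pos_nonneg)
qed

lemma det_add_outer:
  fixes H :: "real^'n^'n"
  assumes "pdm H"
  shows "det H \<le> det (H + outer w)" and "w \<noteq> 0 \<Longrightarrow> det H < det (H + outer w)"
proof -
  have "invertible H" using pdm_det_nz[OF assms] by (simp add: invertible_det_nz)
  then obtain Hi where Hi: "H ** Hi = mat 1" "Hi ** H = mat 1" unfolding invertible_def by blast
  have pHi: "pdm Hi" by (rule pdm_inv[OF assms Hi(1)])
  have dp: "det H > 0" by (rule pdm_det_pos[OF assms])
  have eq: "det (H + outer w) = det H * (1 + (Hi *v w) \<bullet> w)" by (rule det_rank1[OF Hi(1)])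
  have q: "(Hi *v w) \<bullet> w = w \<bullet> (Hi *v w)" by (simp add: inner_commute)
  have "(Hi *v w) \<bullet> w \<ge> 0"
    using pHi unfolding q pdm_def by (cases "w = 0") (auto intro: less_imp_le)
  then show "det H \<le> det (H + outer w)" unfolding eq using dp by simp
  assume "w \<noteq> 0"
  then have "(Hi *v w) \<bullet> w > 0" using pHi unfolding q pdm_def by blast
  then show "det H < det (H + outer w)" unfolding eq using dp by simp
qed

lemma det_mono_sum:
  fixes H :: "real^'n^'n"
  assumes "pdm H" "finite S"
  shows "pdm (H + (\<Sum>i\<in>S. outer (w i))) \<and> det H \<le> det (H + (\<Sum>i\<in>S. outer (w i))) \<and>
    ((\<exists>j\<in>S. w j \<noteq> 0) \<longrightarrow> det H < det (H + (\<Sum>i\<in>S. outer (w i))))"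
  using assms(2)
proof (induction S rule: finite_induct)
  case empty
  then show ?case using assms by simp
next
  case (insert a S)
  let ?H = "H + (\<Sum>i\<in>S. outer (w i))"
  have e: "H + (\<Sum>i\<in>insert a S. outer (w i)) = ?H + outer (w a)"
    using insert by (simp add: add_ac)
  have p: "pdm ?H" using insert by blast
  have "det ?H \<le> det (?H + outer (w a))" by (rule det_add_outer(1)[OF p])
  moreover have "w a \<noteq> 0 \<Longrightarrow> det ?H < det (?H + outer (w a))" by (rule det_add_outer(2)[OF p])
  ultimately show ?case unfolding e using insert pdm_add_outer[OF p]
    by (smt (verit, best) insert_iff)
qed


lemma quad_M: "x \<bullet> ((\<Sum>i\<in>I. a i *\<^sub>R outer (v i)) *v y) = (\<Sum>i\<in>I. a i * ((v i \<bullet> x) * (v i \<bullet> y)))"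
  by (simp add: sum_matrix_vector inner_sum_right scaleR_matrix_vector_assoc[symmetric] outer_mult mult_ac inner_commute)

lemma sym_M: "x \<bullet> ((\<Sum>i\<in>I. a i *\<^sub>R outer (v i)) *v y) = ((\<Sum>i\<in>I. a i *\<^sub>R outer (v i)) *v x) \<bullet> y"
  by (simp add: quad_M inner_commute[of _ y] mult_ac)

lemma pdm_M:
  fixes v :: "nat \<Rightarrow> real^'n"
  assumes "finite I" "span (v ` I) = UNIV" "\<forall>i\<in>I. a i > 0"
  shows "pdm (\<Sum>i\<in>I. a i *\<^sub>R outer (v i))"
  unfolding pdm_def
proof (intro allI impI)
  fix x :: "real^'n" assume "x \<noteq> 0"
  have "\<exists>i\<in>I. v i \<bullet> x \<noteq> 0"
  proof (rule ccontr)
    assume "\<not> ?thesis"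
    then have "orthogonal x x"
      by (intro orthogonal_to_span[of x "v ` I" x]) (auto simp: assms(2) orthogonal_def inner_commute)
    then show False using \<open>x \<noteq> 0\<close> by (simp add: orthogonal_def)
  qed
  then obtain i where i: "i \<in> I" "v i \<bullet> x \<noteq> 0" by blast
  have sq: "(v i \<bullet> x) * (v i \<bullet> x) > 0" using i(2) by (metis not_real_square_gt_zero)
  have "0 < (\<Sum>i\<in>I. a i * ((v i \<bullet> x) * (v i \<bullet> x)))"
  proof (rule sum_pos2[OF assms(1) i(1)])
    show "0 < a i * ((v i \<bullet> x) * (v i \<bullet> x))" using i assms(3) sq by (simp add: mult_pos_pos)
    show "0 \<le> a j * ((v j \<bullet> x) * (v j \<bullet> x))" if "j \<in> I" for j
      using that assms(3) by (metis less_imp_le mult_nonneg_nonneg zero_le_square)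
  qed
  then show "x \<bullet> ((\<Sum>i\<in>I. a i *\<^sub>R outer (v i)) *v x) > 0" by (simp add: quad_M)
qed

lemma cross1: "(\<chi> i j. a$i * p$j) ** transpose (C::real^'n^'n) = (\<chi> i j. a$i * (C *v p)$j)"
  by (simp add: vec_eq_iff matrix_matrix_mult_def matrix_vector_mult_def transpose_def sum_distrib_left mult_ac)

lemma cross2: "(C::real^'n^'n) ** outer p = (\<chi> i j. (C *v p)$i * p$j)"
  by (simp add: vec_eq_iff matrix_matrix_mult_def matrix_vector_mult_def outer_def sum_distrib_right sum_distrib_left mult_ac)

lemma outer_w:
  fixes C :: "real^'n^'n"
  shows "outer (a *\<^sub>R p - b *\<^sub>R (C *v p)) = (a*a) *\<^sub>R outer p - (a*b) *\<^sub>R (outer p ** transpose C)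
     - (a*b) *\<^sub>R (C ** outer p) + (b*b) *\<^sub>R (C ** outer p ** transpose C)"
proof -
  have e1: "outer p ** transpose C = (\<chi> i j. p$i * (C *v p)$j)" unfolding outer_def by (rule cross1)
  have e2: "C ** outer p ** transpose C = (\<chi> i j. (C *v p)$i * (C *v p)$j)"
    unfolding cross2 by (rule cross1)
  have e3: "C ** outer p = (\<chi> i j. (C *v p)$i * p$j)" by (rule cross2)
  show ?thesis unfolding e2 unfolding e1 e3
    by (simp add: outer_def vec_eq_iff algebra_simps)
qed

lemma eigen_bowtie:
  fixes v :: "nat \<Rightarrow> real^'n" and C :: "real^'n^'n"
  assumes eig: "\<forall>k\<in>{1..m}. C *v v k = \<rho> k *\<^sub>R v k" and bt: "bowtie v m i j"
    and ij: "i \<in> {1..m}" "j \<in> {1..m}"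
  shows "\<rho> i = \<rho> j"
proof (rule ccontr)
  assume ne: "\<rho> i \<noteq> \<rho> j"
  obtain K where K: "K \<subseteq> {1..m}" "i \<notin> K" "j \<notin> K" "basis_family v (insert i K)" "basis_family v (insert j K)"
    using bt unfolding bowtie_def by blast
  have notin: "v i \<notin> v ` K" "v j \<notin> v ` K"
    using K unfolding basis_family_def inj_on_def by blast+
  have ind: "v i \<notin> span (v ` K)" "v j \<notin> span (v ` K)"
  proof -
    have "independent (insert (v i) (v ` K))" using K(4) unfolding basis_family_def by simp
    then show "v i \<notin> span (v ` K)" using notin dependent_def by (metis Diff_insert_absorb insertI1)
    have "independent (insert (v j) (v ` K))" using K(5) unfolding basis_family_def by simp
    then show "v j \<notin> span (v ` K)" using notin dependent_def by (metis Diff_insert_absorb insertI1)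
  qed
  have "v j \<in> span (insert (v i) (v ` K))" using K(4) unfolding basis_family_def by simp
  then obtain a where a: "v j - a *\<^sub>R v i \<in> span (v ` K)" by (auto simp: span_insert)
  define s where "s = v j - a *\<^sub>R v i"
  have a0: "a \<noteq> 0" using a ind(2) by auto
  have sub: "(\<lambda>x. C *v x) ` (v ` K) \<subseteq> span (v ` K)"
  proof
    fix y assume "y \<in> (\<lambda>x. C *v x) ` (v ` K)"
    then obtain k where k: "k \<in> K" "y = C *v v k" by auto
    then have "y = \<rho> k *\<^sub>R v k" using eig K(1) by auto
    then show "y \<in> span (v ` K)" using k by (simp add: span_base span_mul)
  qed
  have "C *v s \<in> (\<lambda>x. C *v x) ` span (v ` K)" using a s_def by blast
  also have "\<dots> = span ((\<lambda>x. C *v x) ` (v ` K))" by (rule span_linear_image[symmetric]) simp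
  also have "\<dots> \<subseteq> span (v ` K)" using sub by (metis span_mono span_span)
  finally have Cs: "C *v s \<in> span (v ` K)" .
  have vj: "v j = a *\<^sub>R v i + s" by (simp add: s_def)
  have sc: "C *v (a *\<^sub>R y) = a *\<^sub>R (C *v y)" for y :: "real^'n"
    by (simp add: vec_eq_iff matrix_vector_mult_def sum_distrib_left mult_ac)
  have "\<rho> j *\<^sub>R v j = C *v v j" using eig ij by simp
  also have "\<dots> = (a * \<rho> i) *\<^sub>R v i + C *v s"
    using eig ij by (simp add: vj matrix_vector_right_distrib sc)
  finally have "(a * (\<rho> i - \<rho> j)) *\<^sub>R v i = \<rho> j *\<^sub>R s - C *v s"
    by (simp add: vj algebra_simps)
  moreover define k where "k = a * (\<rho> i - \<rho> j)"
  ultimately have eqk: "k *\<^sub>R v i = \<rho> j *\<^sub>R s - C *v s" by simp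
  have k0: "k \<noteq> 0" using a0 ne by (simp add: k_def)
  have "v i = (1 / k) *\<^sub>R (k *\<^sub>R v i)" using k0 by simp
  also have "\<dots> = (1 / k) *\<^sub>R (\<rho> j *\<^sub>R s - C *v s)" by (simp only: eqk)
  finally have "v i = (1 / k) *\<^sub>R (\<rho> j *\<^sub>R s - C *v s)" .
  moreover have "\<rho> j *\<^sub>R s - C *v s \<in> span (v ` K)"
    using a Cs s_def by (intro span_diff span_mul) auto
  ultimately have "v i \<in> span (v ` K)" by (metis span_mul)
  then show False using ind(1) by simp
qed


lemma sum_scaled_mult_left: "(\<Sum>i\<in>S. f i *\<^sub>R ((X i :: real^'n^'n) ** T)) = (\<Sum>i\<in>S. f i *\<^sub>R X i) ** T"
  by (simp add: sum_matrix_mult_left scalar_matrix_assoc)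

lemma sum_scaled_mult_right: "(\<Sum>i\<in>S. f i *\<^sub>R ((T :: real^'n^'n) ** X i)) = T ** (\<Sum>i\<in>S. f i *\<^sub>R X i)"
  by (simp add: sum_matrix_mult_right matrix_scalar_ac scalar_matrix_assoc)

lemma rtranclp_rho:
  fixes v :: "nat \<Rightarrow> real^'n" and C :: "real^'n^'n"
  assumes eig: "\<forall>k\<in>{1..m}. C *v v k = \<rho> k *\<^sub>R v k"
    and "(\<lambda>a b. a \<in> {1..m} \<and> b \<in> {1..m} \<and> bowtie v m a b)\<^sup>*\<^sup>* x y"
  shows "\<rho> x = \<rho> y"
  using assms(2)
proof (induction rule: rtranclp_induct)
  case base
  then show ?case by simp
next
  case (step y z)
  then show ?case using eigen_bowtie[OF eig, of y z] by simp
qed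

theorem proposition8:
  fixes v :: "nat \<Rightarrow> real^'n" and m :: nat and c lam mu :: "nat \<Rightarrow> real"
  assumes "m \<ge> CARD('n)"
    and "\<forall>i\<in>{1..m}. v i \<noteq> 0"
    and "span (v ` {1..m}) = UNIV"
    and "irreducible_family v m"
    and "\<forall>i\<in>{1..m}. c i > 0"
    and "(\<Sum>i\<in>{1..m}. c i) = real CARD('n)"
    and "\<forall>i\<in>{1..m}. lam i > 0" and "\<forall>i\<in>{1..m}. mu i > 0"
    and "bl_ratio v m c lam = D_const v m c"
    and "bl_ratio v m c mu = D_const v m c"
  shows "\<exists>r::real. \<forall>i\<in>{1..m}. lam i = r * mu i"
proof -
  let ?I = "{1..m}"
  have fin: "finite ?I" by simp
  define s where "s i = sqrt (lam i)" for i
  define t where "t i = sqrt (mu i)" for i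
  define nu where "nu i = s i * t i" for i
  define A where "A = (\<Sum>i\<in>?I. lam i *\<^sub>R outer (v i))"
  define B where "B = (\<Sum>i\<in>?I. mu i *\<^sub>R outer (v i))"
  define N where "N = (\<Sum>i\<in>?I. nu i *\<^sub>R outer (v i))"
  have spos: "s i > 0" "s i * s i = lam i" if "i \<in> ?I" for i
    using assms(7) that by (auto simp: s_def abs_of_pos)
  have tpos: "t i > 0" "t i * t i = mu i" if "i \<in> ?I" for i
    using assms(8) that by (auto simp: t_def abs_of_pos)
  have nupos: "\<forall>i\<in>?I. nu i > 0" using spos tpos by (simp add: nu_def)
  have pA: "pdm A" unfolding A_def by (rule pdm_M[OF fin assms(3) assms(7)])
  have pB: "pdm B" unfolding B_def by (rule pdm_M[OF fin assms(3) assms(8)])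
  have pN: "pdm N" unfolding N_def by (rule pdm_M[OF fin assms(3) nupos])
  have "invertible B" using pdm_det_nz[OF pB] by (simp add: invertible_det_nz)
  then obtain Bi where Bi: "B ** Bi = mat 1" "Bi ** B = mat 1" unfolding invertible_def by blast
  define C where "C = N ** Bi"
  define G where "G = C ** N"
  define w where "w i = s i *\<^sub>R v i - t i *\<^sub>R (C *v v i)" for i
  have idn: "A = G + (\<Sum>i\<in>?I. outer (w i))"
  proof -
    have "(\<Sum>i\<in>?I. outer (w i)) = (\<Sum>i\<in>?I. lam i *\<^sub>R outer (v i) - nu i *\<^sub>R (outer (v i) ** transpose C)
      - nu i *\<^sub>R (C ** outer (v i)) + mu i *\<^sub>R (C ** outer (v i) ** transpose C))"
      by (rule sum.cong) (simp_all add: w_def outer_w spos tpos nu_def)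
    also have "\<dots> = A - N ** transpose C - C ** N + C ** B ** transpose C"
      by (simp add: sum.distrib sum_subtractf sum_scaled_mult_left sum_scaled_mult_right A_def B_def N_def
          matrix_mul_assoc[symmetric])
    also have "C ** B ** transpose C = N ** transpose C"
      by (simp add: C_def matrix_mul_assoc[symmetric] Bi)
    finally show ?thesis by (simp add: G_def)
  qed
  have dle: "det A \<le> det G"
  proof -
    define D where "D = D_const v m c"
    define pr where "pr a = (\<Prod>i\<in>?I. a i powr c i)" for a :: "nat \<Rightarrow> real"
    have prpos: "pr a > 0" if "\<forall>i\<in>?I. a i > 0" for a
      unfolding pr_def using that by (intro prod_pos) force
    have ratio: "bl_ratio v m c a = det (\<Sum>i\<in>?I. a i *\<^sub>R outer (v i)) / pr a" for a
      by (simp add: bl_ratio_def pr_def)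
    have rpos: "bl_ratio v m c a > 0" if "\<forall>i\<in>?I. a i > 0" for a
      unfolding ratio using pdm_det_pos[OF pdm_M[OF fin assms(3) that]] prpos[OF that] by simp
    have bdd: "bdd_below {bl_ratio v m c a | a. \<forall>i\<in>?I. a i > 0}"
    proof (rule bdd_belowI[of _ 0])
      fix x assume "x \<in> {bl_ratio v m c a | a. \<forall>i\<in>?I. a i > 0}"
      then obtain a where "x = bl_ratio v m c a" "\<forall>i\<in>?I. a i > 0" by blast
      then show "0 \<le> x" using rpos by (metis less_imp_le)
    qed
    have "D \<le> bl_ratio v m c nu" unfolding D_def D_const_def
      by (rule cInf_lower[OF _ bdd]) (use nupos in blast)
    then have eN: "D * pr nu \<le> det N"
      using prpos[OF nupos] by (simp add: ratio N_def field_simps)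
    have eA: "det A = D * pr lam"
      using assms(9) prpos[OF assms(7)] by (simp add: ratio A_def D_def field_simps)
    have eB: "det B = D * pr mu"
      using assms(10) prpos[OF assms(8)] by (simp add: ratio B_def D_def field_simps)
    have Dpos: "D > 0" using eA pdm_det_pos[OF pA] prpos[OF assms(7)] by (simp add: zero_less_mult_iff)
    have pp: "pr nu * pr nu = pr lam * pr mu"
    proof -
      have "pr nu * pr nu = (\<Prod>i\<in>?I. nu i powr c i * nu i powr c i)"
        by (simp add: pr_def prod.distrib)
      also have "\<dots> = (\<Prod>i\<in>?I. lam i powr c i * mu i powr c i)"
      proof (rule prod.cong)
        fix i assume i: "i \<in> ?I"
        have "nu i powr c i * nu i powr c i = (nu i * nu i) powr c i"
          using nupos i by (simp add: powr_mult)
        also have "nu i * nu i = lam i * mu i"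
          using spos[OF i] tpos[OF i] by (simp add: nu_def algebra_simps)
        also have "(lam i * mu i) powr c i = lam i powr c i * mu i powr c i"
          using assms(7,8) i by (simp add: powr_mult less_imp_le)
        finally show "nu i powr c i * nu i powr c i = lam i powr c i * mu i powr c i" .
      qed simp
      also have "\<dots> = pr lam * pr mu" by (simp add: pr_def prod.distrib)
      finally show ?thesis .
    qed
    have "det A * det B = (D * pr nu) * (D * pr nu)"
      by (simp add: eA eB pp[symmetric] algebra_simps)
    also have "\<dots> \<le> det N * det N"
      using eN Dpos prpos[OF nupos] pdm_det_pos[OF pN] by (intro mult_mono) auto
    also have "det N * det N = det G * det B"
    proof -
      have "det B * det Bi = 1" using Bi(1) by (metis det_I det_mul)
      then show ?thesis by (simp add: G_def C_def det_mul algebra_simps)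
    qed
    finally have "det A * det B \<le> det G * det B" .
    then show ?thesis using pdm_det_pos[OF pB] by simp
  qed
  have pG: "pdm G"
    unfolding pdm_def
  proof (intro allI impI)
    fix x :: "real^'n" assume "x \<noteq> 0"
    define y where "y = N *v x"
    have "x \<bullet> y > 0" using pN \<open>x \<noteq> 0\<close> unfolding pdm_def y_def by blast
    then have "y \<noteq> 0" by auto
    moreover have "pdm Bi" by (rule pdm_inv[OF pB Bi(1)])
    ultimately have "y \<bullet> (Bi *v y) > 0" unfolding pdm_def by blast
    moreover have "x \<bullet> (G *v x) = y \<bullet> (Bi *v y)"
      by (simp add: G_def C_def y_def matrix_vector_mul_assoc[symmetric] N_def sym_M[where y="Bi *v _"])
    ultimately show "x \<bullet> (G *v x) > 0" by simp
  qed
  have w0: "w j = 0" if "j \<in> ?I" for j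
    using det_mono_sum[OF pG fin, of w] dle idn that by force
  have eig: "\<forall>k\<in>?I. C *v v k = (s k / t k) *\<^sub>R v k"
  proof
    fix k assume k: "k \<in> ?I"
    have e: "t k *\<^sub>R (C *v v k) = s k *\<^sub>R v k" using w0[OF k] by (simp add: w_def)
    have "C *v v k = (1 / t k) *\<^sub>R (t k *\<^sub>R (C *v v k))" using tpos[OF k] by simp
    also have "\<dots> = (s k / t k) *\<^sub>R v k" by (simp only: e) simp
    finally show "C *v v k = (s k / t k) *\<^sub>R v k" .
  qed
  show ?thesis
  proof (cases "m = 0")
    case True
    then show ?thesis by simp
  next
    case False
    then have one: "1 \<in> ?I" by simp
    have "lam i = (lam 1 / mu 1) * mu i" if i: "i \<in> ?I" for i
    proof -
      have "(\<lambda>a b. a \<in> ?I \<and> b \<in> ?I \<and> bowtie v m a b)\<^sup>*\<^sup>* 1 i"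
        using assms(4) one i unfolding irreducible_family_def by blast
      then have "s 1 / t 1 = s i / t i" by (rule rtranclp_rho[OF eig])
      then have "(s 1 / t 1) * (s 1 / t 1) = (s i / t i) * (s i / t i)" by simp
      then have "lam 1 / mu 1 = lam i / mu i" using spos tpos one i by (simp add: field_simps)
      moreover have "mu i > 0" using assms(8) i by blast
      ultimately show ?thesis by (simp add: field_simps)
    qed
    then show ?thesis by blast
  qed
qed

end
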